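(* Let $G$ be a group acting on the right on a set $X$, let $S$ be a finite set generating $G$ as a monoid, and let $x_0\in X$. For a word $w=w_1\cdots w_\ell$ over $S$ let $\mathcal O(w)=\{x_0,\,x_0w_\ell,\,x_0w_{\ell-1}w_\ell,\dots,x_0w_1w_2\cdots w_\ell\}$, $\delta(w)=\#\mathcal O(w)$, and $\Delta(n)=\max\{\delta(w): w \text{ a word over } S,\ |w|=n\}$. Then: if $G$ is finitely generated, the $\sim$-equivalence class of $\Delta$ does not depend on the choice of the finite generating set $S$; and if $G$ acts transitively on $X$, the $\sim$-equivalence class of $\Delta$ does not depend on the choice of $x_0$.
   Context: For functions $f,g:\mathbb N\to\mathbb R_+$, write $g\preceq f$ if there is $C>0$ with $g(n)\le f(Cn)$ for all sufficiently large $n$, and $f\sim g$ if $f\preceq g$ and $g\preceq f$. $\mathcal O(w)$ is called the inverted orbit of $w$ and $\Delta$ the inverted orbit growth function. *)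

theory Defs
  imports "HOL-Algebra.Group"
begin

definition right_action :: "('a, 'b) monoid_scheme \<Rightarrow> 'x set \<Rightarrow> ('x \<Rightarrow> 'a \<Rightarrow> 'x) \<Rightarrow> bool" where
  "right_action G X act \<longleftrightarrow>
     (\<forall>x\<in>X. \<forall>g\<in>carrier G. act x g \<in> X) \<and>
     (\<forall>x\<in>X. act x \<one>\<^bsub>G\<^esub> = x) \<and>
     (\<forall>x\<in>X. \<forall>g\<in>carrier G. \<forall>h\<in>carrier G. act (act x g) h = act x (g \<otimes>\<^bsub>G\<^esub> h))"

definition transitive_action :: "('a, 'b) monoid_scheme \<Rightarrow> 'x set \<Rightarrow> ('x \<Rightarrow> 'a \<Rightarrow> 'x) \<Rightarrow> bool" where
  "transitive_action G X act \<longleftrightarrow> (\<forall>x\<in>X. \<forall>y\<in>X. \<exists>g\<in>carrier G. act x g = y)"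

definition word_prod :: "('a, 'b) monoid_scheme \<Rightarrow> 'a list \<Rightarrow> 'a" where
  "word_prod G w = foldr (\<lambda>a b. a \<otimes>\<^bsub>G\<^esub> b) w \<one>\<^bsub>G\<^esub>"

definition monoid_generates :: "('a, 'b) monoid_scheme \<Rightarrow> 'a set \<Rightarrow> bool" where
  "monoid_generates G S \<longleftrightarrow> S \<subseteq> carrier G \<and> (\<forall>g\<in>carrier G. \<exists>w\<in>lists S. g = word_prod G w)"

definition inverted_orbit :: "('a, 'b) monoid_scheme \<Rightarrow> ('x \<Rightarrow> 'a \<Rightarrow> 'x) \<Rightarrow> 'x \<Rightarrow> 'a list \<Rightarrow> 'x set" where
  "inverted_orbit G act x0 w = insert x0 {act x0 (word_prod G (drop i w)) | i. i \<le> length w}"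

definition delta :: "('a, 'b) monoid_scheme \<Rightarrow> ('x \<Rightarrow> 'a \<Rightarrow> 'x) \<Rightarrow> 'x \<Rightarrow> 'a list \<Rightarrow> nat" where
  "delta G act x0 w = card (inverted_orbit G act x0 w)"

definition Delta :: "('a, 'b) monoid_scheme \<Rightarrow> ('x \<Rightarrow> 'a \<Rightarrow> 'x) \<Rightarrow> 'a set \<Rightarrow> 'x \<Rightarrow> nat \<Rightarrow> nat" where
  "Delta G act S x0 n = Max {delta G act x0 w | w. w \<in> lists S \<and> length w = n}"

definition growth_le :: "(nat \<Rightarrow> nat) \<Rightarrow> (nat \<Rightarrow> nat) \<Rightarrow> bool" where
  "growth_le g f \<longleftrightarrow> (\<exists>C::nat. C > 0 \<and> (\<forall>\<^sub>F n in sequentially. g n \<le> f (C * n)))"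

definition growth_equiv :: "(nat \<Rightarrow> nat) \<Rightarrow> (nat \<Rightarrow> nat) \<Rightarrow> bool" where
  "growth_equiv f g \<longleftrightarrow> growth_le f g \<and> growth_le g f"

end

theory Submission
  imports Defs
begin

lemma wp_Nil[simp]: "word_prod G [] = \<one>\<^bsub>G\<^esub>" by (simp add: word_prod_def)
lemma wp_Cons[simp]: "word_prod G (x#w) = x \<otimes>\<^bsub>G\<^esub> word_prod G w" by (simp add: word_prod_def)

context group begin

lemma wp_closed: "set w \<subseteq> carrier G \<Longrightarrow> word_prod G w \<in> carrier G"
  by (induction w) auto

lemma wp_append: "set a \<subseteq> carrier G \<Longrightarrow> set b \<subseteq> carrier G \<Longrightarrow>
   word_prod G (a @ b) = word_prod G a \<otimes> word_prod G b"
  by (induction a) (auto simp: wp_closed m_assoc)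

lemma conj_concat:
  assumes "\<forall>t\<in>set u. set (c t) \<subseteq> carrier G \<and> word_prod G (c t) = g \<otimes> t \<otimes> inv g \<and> t \<in> carrier G"
    and g: "g \<in> carrier G"
  shows "set (concat (map c u)) \<subseteq> carrier G \<and> word_prod G (concat (map c u)) \<otimes> g = g \<otimes> word_prod G u"
  using assms(1)
proof (induction u)
  case Nil then show ?case using g by simp
next
  case (Cons t u)
  then have IH: "set (concat (map c u)) \<subseteq> carrier G" "word_prod G (concat (map c u)) \<otimes> g = g \<otimes> word_prod G u"
    and ct: "set (c t) \<subseteq> carrier G" "word_prod G (c t) = g \<otimes> t \<otimes> inv g" and t: "t \<in> carrier G" by auto
  have P: "word_prod G (concat (map c u)) \<in> carrier G" "word_prod G u \<in> carrier G"
    using IH(1) Cons.prems by (auto intro!: wp_closed)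
  have A: "g \<otimes> t \<otimes> inv g \<in> carrier G" using g t by auto
  have "word_prod G (concat (map c (t#u))) \<otimes> g = (g \<otimes> t \<otimes> inv g) \<otimes> (word_prod G (concat (map c u)) \<otimes> g)"
    using ct IH(1) P g A by (simp add: wp_append m_assoc)
  also have "\<dots> = (g \<otimes> t \<otimes> inv g) \<otimes> (g \<otimes> word_prod G u)" using IH(2) by simp
  also have "\<dots> = (g \<otimes> t) \<otimes> (inv g \<otimes> (g \<otimes> word_prod G u))" using g t P by (simp add: m_assoc)
  also have "inv g \<otimes> (g \<otimes> word_prod G u) = word_prod G u"
    using g P by (metis inv_closed l_inv l_one m_assoc)
  also have "(g \<otimes> t) \<otimes> word_prod G u = g \<otimes> word_prod G (t#u)" using g t P by (simp add: m_assoc)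
  finally show ?case using ct IH(1) by simp
qed

lemma finite_orbit: "finite (inverted_orbit G act x0 w)"
proof -
  have "{act x0 (word_prod G (drop i w)) | i. i \<le> length w} = (\<lambda>i. act x0 (word_prod G (drop i w))) ` {..length w}"
    by auto
  then show ?thesis unfolding inverted_orbit_def by simp
qed

lemma orbit_prepend: "inverted_orbit G act x0 w \<subseteq> inverted_orbit G act x0 (u @ w)"
proof
  fix y assume "y \<in> inverted_orbit G act x0 w"
  then consider "y = x0" | i where "i \<le> length w" "y = act x0 (word_prod G (drop i w))"
    unfolding inverted_orbit_def by auto
  then show "y \<in> inverted_orbit G act x0 (u @ w)"
  proof cases
    case 1 then show ?thesis unfolding inverted_orbit_def by auto
  next
    case 2
    have "drop (length u + i) (u @ w) = drop i w" by simp
    then show ?thesis unfolding inverted_orbit_def using 2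
      by (auto intro!: exI[of _ "length u + i"])
  qed
qed

lemma delta_le_Delta:
  assumes "finite S" "w \<in> lists S"
  shows "delta G act x0 w \<le> Delta G act S x0 (length w)"
proof -
  have "{w. w \<in> lists S \<and> length w = n} = {w. set w \<subseteq> S \<and> length w = n}" for n by auto
  then have "finite {w. w \<in> lists S \<and> length w = n}" for n
    using finite_lists_length_eq[OF assms(1)] by simp
  then have "finite {delta G act x0 w | w. w \<in> lists S \<and> length w = n}" for n
    by (simp add: setcompr_eq_image)
  then show ?thesis unfolding Delta_def using assms by (auto intro!: Max_ge)
qed

lemma Delta_attained:
  assumes "finite S" "S \<noteq> {}"
  obtains w where "w \<in> lists S" "length w = n" "Delta G act S x0 n = delta G act x0 w"
proof -
  have "{w. w \<in> lists S \<and> length w = n} = {w. set w \<subseteq> S \<and> length w = n}" for n by auto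
  then have "finite {w. w \<in> lists S \<and> length w = n}" for n
    using finite_lists_length_eq[OF assms(1)] by simp
  then have fin: "finite {delta G act x0 w | w. w \<in> lists S \<and> length w = n}"
    by (simp add: setcompr_eq_image)
  obtain s where s: "s \<in> S" using assms(2) by auto
  have "replicate n s \<in> lists S \<and> length (replicate n s) = n" using s by auto
  then have ne: "{delta G act x0 w | w. w \<in> lists S \<and> length w = n} \<noteq> {}" by blast
  from Max_in[OF fin ne] show ?thesis using that unfolding Delta_def by auto
qed

lemma Delta_mono:
  assumes "finite S" "S \<noteq> {}" "n \<le> n'"
  shows "Delta G act S x0 n \<le> Delta G act S x0 n'"
proof -
  obtain w where w: "w \<in> lists S" "length w = n" "Delta G act S x0 n = delta G act x0 w"
    by (rule Delta_attained[OF assms(1,2)])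
  obtain s where s: "s \<in> S" using assms(2) by auto
  define w' where "w' = replicate (n' - n) s @ w"
  have "delta G act x0 w \<le> delta G act x0 w'"
    unfolding delta_def w'_def by (intro card_mono finite_orbit orbit_prepend)
  also have "delta G act x0 w' \<le> Delta G act S x0 (length w')"
    using s w unfolding w'_def by (intro delta_le_Delta[OF assms(1)]) auto
  also have "length w' = n'" using w assms unfolding w'_def by simp
  finally show ?thesis using w(3) by simp
qed

lemma length_concat_le:
  "\<forall>t\<in>set w. length (c t) \<le> K \<Longrightarrow> length (concat (map c w)) \<le> K * length w"
  by (induction w) auto

lemma orbit_sub:
  assumes A: "right_action G X act" and x0: "x0 \<in> X" and g: "g \<in> carrier G"
    and T: "T \<subseteq> carrier G" and S: "S \<subseteq> carrier G" and w: "set w \<subseteq> T"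
    and c: "\<forall>t\<in>T. set (c t) \<subseteq> S \<and> word_prod G (c t) = g \<otimes>\<^bsub>G\<^esub> t \<otimes>\<^bsub>G\<^esub> inv\<^bsub>G\<^esub> g"
    and v: "set v \<subseteq> S" "word_prod G v = g"
  shows "inverted_orbit G act (act x0 g) w \<subseteq> inverted_orbit G act x0 (concat (map c w) @ v)"
proof
  let ?W = "concat (map c w) @ v"
  have act: "act (act x0 a) b = act x0 (a \<otimes> b)" if "a \<in> carrier G" "b \<in> carrier G" for a b
    using A x0 that unfolding right_action_def by auto
  have key: "act x0 (word_prod G (drop (length (concat (map c (take i w)))) ?W)) \<in> inverted_orbit G act x0 ?W" for i
  proof -
    have "length (concat (map c (take i w))) \<le> length ?W"
    proof -
      have "concat (map c w) = concat (map c (take i w)) @ concat (map c (drop i w))"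
        by (metis append_take_drop_id concat_append map_append)
      then show ?thesis by (metis le_add1 length_append order_trans)
    qed
    then show ?thesis unfolding inverted_orbit_def by blast
  qed
  have dropeq: "drop (length (concat (map c (take i w)))) ?W = concat (map c (drop i w)) @ v" for i
  proof -
    have "concat (map c w) = concat (map c (take i w)) @ concat (map c (drop i w))"
      by (metis append_take_drop_id concat_append map_append)
    then show ?thesis by (metis append_assoc append_eq_conv_conj)
  qed
  have prodeq: "word_prod G (concat (map c (drop i w)) @ v) = g \<otimes> word_prod G (drop i w)" for i
  proof -
    have hyp: "\<forall>t\<in>set (drop i w). set (c t) \<subseteq> carrier G \<and> word_prod G (c t) = g \<otimes> t \<otimes> inv g \<and> t \<in> carrier G"
      using c T S set_drop_subset[of i w] w by (meson subset_iff)
    note cc = conj_concat[OF hyp g]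
    have "set v \<subseteq> carrier G" using v S by auto
    then have "word_prod G (concat (map c (drop i w)) @ v) = word_prod G (concat (map c (drop i w))) \<otimes> g"
      using cc v by (simp add: wp_append)
    then show ?thesis using cc by simp
  qed
  fix y assume "y \<in> inverted_orbit G act (act x0 g) w"
  then consider "y = act x0 g" | i where "i \<le> length w" "y = act (act x0 g) (word_prod G (drop i w))"
    unfolding inverted_orbit_def by auto
  then show "y \<in> inverted_orbit G act x0 ?W"
  proof cases
    case 1
    have "word_prod G (drop (length (concat (map c (take (length w) w)))) ?W) = g"
      using dropeq[of "length w"] v(2) by simp
    then show ?thesis using key[of "length w"] 1 by metis
  next
    case 2
    have dc: "set (drop i w) \<subseteq> carrier G" using w T set_drop_subset by (metis order_trans)
    have "y = act x0 (g \<otimes> word_prod G (drop i w))" using 2(2) act[OF g wp_closed[OF dc]] by simp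
    also have "\<dots> = act x0 (word_prod G (drop (length (concat (map c (take i w)))) ?W))"
      using dropeq[of i] prodeq[of i] by simp
    finally have yy: "y = act x0 (word_prod G (drop (length (concat (map c (take i w)))) ?W))" .
    show ?thesis unfolding yy by (rule key)
  qed
qed

lemma main_le:
  assumes A: "right_action G X act" and S: "finite S" "S \<noteq> {}" "monoid_generates G S"
    and T: "finite T" "T \<noteq> {}" "T \<subseteq> carrier G" and x0: "x0 \<in> X" and g: "g \<in> carrier G"
  shows "growth_le (Delta G act T (act x0 g)) (Delta G act S x0)"
proof -
  have Sc: "S \<subseteq> carrier G" using S(3) unfolding monoid_generates_def by auto
  have ex: "\<exists>u. set u \<subseteq> S \<and> word_prod G u = g \<otimes> t \<otimes> inv g" if "t \<in> T" for t
  proof -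
    have "g \<otimes> t \<otimes> inv g \<in> carrier G" using that T g by auto
    then obtain u where "u \<in> lists S" "g \<otimes> t \<otimes> inv g = word_prod G u"
      using S(3) unfolding monoid_generates_def by blast
    then show ?thesis by auto
  qed
  define c where "c t = (SOME u. set u \<subseteq> S \<and> word_prod G u = g \<otimes> t \<otimes> inv g)" for t
  have c: "\<forall>t\<in>T. set (c t) \<subseteq> S \<and> word_prod G (c t) = g \<otimes> t \<otimes> inv g"
  proof
    fix t assume "t \<in> T"
    from someI_ex[OF ex[OF this]] show "set (c t) \<subseteq> S \<and> word_prod G (c t) = g \<otimes> t \<otimes> inv g"
      unfolding c_def .
  qed
  obtain v0 where v0: "v0 \<in> lists S" "g = word_prod G v0"
    using S(3) g unfolding monoid_generates_def by blast
  obtain v where v: "set v \<subseteq> S" "word_prod G v = g" using v0 by auto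
  define K where "K = Max ((\<lambda>t. length (c t)) ` T)"
  have K: "\<forall>t\<in>T. length (c t) \<le> K" unfolding K_def using T(1) by auto
  define C where "C = K + length v + 1"
  have "\<forall>n\<ge>1. Delta G act T (act x0 g) n \<le> Delta G act S x0 (C * n)"
  proof (intro allI impI)
    fix n :: nat assume n: "n \<ge> 1"
    obtain w where w: "w \<in> lists T" "length w = n" "Delta G act T (act x0 g) n = delta G act (act x0 g) w"
      by (rule Delta_attained[OF T(1,2)])
    let ?W = "concat (map c w) @ v"
    have "delta G act (act x0 g) w \<le> delta G act x0 ?W"
      unfolding delta_def
      by (rule card_mono[OF finite_orbit orbit_sub[OF A x0 g T(3) Sc _ c v]]) (use w in auto)
    also have "\<dots> \<le> Delta G act S x0 (length ?W)"
      using v c w by (intro delta_le_Delta[OF S(1)]) (auto, blast)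
    also have "\<dots> \<le> Delta G act S x0 (C * n)"
    proof (rule Delta_mono[OF S(1,2)])
      have "length (concat (map c w)) \<le> K * n" using length_concat_le[of w c K] K w by auto
      moreover have "length v \<le> length v * n" using n by simp
      moreover have "C * n = K * n + length v * n + n" unfolding C_def by (simp add: algebra_simps)
      ultimately show "length ?W \<le> C * n" unfolding length_append by linarith
    qed
    finally show "Delta G act T (act x0 g) n \<le> Delta G act S x0 (C * n)" using w by simp
  qed
  then have "\<forall>\<^sub>F n in sequentially. Delta G act T (act x0 g) n \<le> Delta G act S x0 (C * n)"
    using eventually_sequentially by blast
  then show ?thesis unfolding growth_le_def C_def by (intro exI[of _ C]) (auto simp: C_def)
qed

end

theorem lemma2p3:
  fixes G :: "('a, 'b) monoid_scheme" and X :: "'x set" and act :: "'x \<Rightarrow> 'a \<Rightarrow> 'x"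
  assumes "group G" and "right_action G X act"
  shows "(\<forall>S1 S2 x0. finite S1 \<and> S1 \<noteq> {} \<and> monoid_generates G S1 \<and>
                     finite S2 \<and> S2 \<noteq> {} \<and> monoid_generates G S2 \<and> x0 \<in> X
            \<longrightarrow> growth_equiv (Delta G act S1 x0) (Delta G act S2 x0))
       \<and> (transitive_action G X act \<longrightarrow>
            (\<forall>S x0 x1. finite S \<and> S \<noteq> {} \<and> monoid_generates G S \<and> x0 \<in> X \<and> x1 \<in> X
            \<longrightarrow> growth_equiv (Delta G act S x0) (Delta G act S x1)))"
proof (intro conjI allI impI)
  fix S1 S2 x0
  assume h: "finite S1 \<and> S1 \<noteq> {} \<and> monoid_generates G S1 \<and> finite S2 \<and> S2 \<noteq> {} \<and> monoid_generates G S2 \<and> x0 \<in> X"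
  have one: "act x0 \<one>\<^bsub>G\<^esub> = x0" using assms(2) h unfolding right_action_def by auto
  have c1: "S1 \<subseteq> carrier G" "S2 \<subseteq> carrier G" using h unfolding monoid_generates_def by auto
  show "growth_equiv (Delta G act S1 x0) (Delta G act S2 x0)"
    unfolding growth_equiv_def
    using group.main_le[OF assms, of S2 S1 x0 "\<one>\<^bsub>G\<^esub>"] group.main_le[OF assms, of S1 S2 x0 "\<one>\<^bsub>G\<^esub>"] h c1 one monoid.one_closed[OF group.is_monoid[OF assms(1)]] by auto
next
  fix S x0 x1
  assume tr: "transitive_action G X act"
    and h: "finite S \<and> S \<noteq> {} \<and> monoid_generates G S \<and> x0 \<in> X \<and> x1 \<in> X"
  have c1: "S \<subseteq> carrier G" using h unfolding monoid_generates_def by auto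
  obtain g where g: "g \<in> carrier G" "act x0 g = x1" using tr h unfolding transitive_action_def by blast
  obtain g' where g': "g' \<in> carrier G" "act x1 g' = x0" using tr h unfolding transitive_action_def by blast
  show "growth_equiv (Delta G act S x0) (Delta G act S x1)"
    unfolding growth_equiv_def
    using group.main_le[OF assms, of S S x1 g'] group.main_le[OF assms, of S S x0 g] h c1 g g' by auto
qed

end
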